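(* Let $X$ be a real vector space and let $K\subseteq X$ be a nontrivial convex cone having a convex and relatively solid base $B$. Then $K^{ss}:=\{l\in X':\ \inf_{b\in B}l(b)>0\}$ is nonempty.
   Context: $X'$ is the algebraic dual of $X$. $K$ nontrivial means $K\ne\{0\}$, $K\ne X$. A base of $K$ is a set $B$ with $0\notin B$ such that each $k\in K\setminus\{0\}$ has a unique representation $k=tb$ with $t>0$, $b\in B$. $B$ is relatively solid if $icr(B)\neq\emptyset$, where $icr(B):=\{x\in B:\ \forall x'\in span(B-B)\ \exists \lambda'>0 \text{ with } x+\lambda x'\in B\ \forall\lambda\in[0,\lambda']\}$. *)

theory Defs
  imports "HOL-Analysis.Analysis"
begin

definition is_base :: "'a::real_vector set \<Rightarrow> 'a set \<Rightarrow> bool" where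
  "is_base K B \<longleftrightarrow> 0 \<notin> B \<and> B \<subseteq> K \<and>
     (\<forall>k\<in>K - {0}. \<exists>!p. fst p > 0 \<and> snd p \<in> B \<and> k = fst p *\<^sub>R snd p)"

definition icr :: "'a::real_vector set \<Rightarrow> 'a set" where
  "icr B = {x \<in> B. \<forall>x' \<in> span {y - z | y z. y \<in> B \<and> z \<in> B}.
              \<exists>l'>0. \<forall>l\<in>{0..l'}. x + l *\<^sub>R x' \<in> B}"

definition relatively_solid :: "'a::real_vector set \<Rightarrow> bool" where
  "relatively_solid B \<longleftrightarrow> icr B \<noteq> {}"

text \<open>K^ss: linear functionals (elements of the algebraic dual) whose infimum
over B is strictly positive, i.e. which are bounded below on B by some eps > 0.\<close>
definition Kss :: "'a::real_vector set \<Rightarrow> ('a \<Rightarrow> real) set" where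
  "Kss B = {l. linear l \<and> (\<exists>e>0. \<forall>b\<in>B. e \<le> l b)}"

end

theory Submission
  imports Defs
begin

theorem lemma4p15:
  fixes K B :: "'a::real_vector set"
  assumes "convex K" and "cone K"
    and "K \<noteq> {0}" and "K \<noteq> UNIV"
    and "is_base K B" and "convex B" and "relatively_solid B"
  shows "Kss B \<noteq> {}"
proof -
  define S where "S = {y - z | y z. y \<in> B \<and> z \<in> B}"
  obtain x where x: "x \<in> icr B" using assms(7) unfolding relatively_solid_def by blast
  have xB: "x \<in> B" using x unfolding icr_def by blast
  have base: "0 \<notin> B" "B \<subseteq> K"
    "\<forall>k\<in>K - {0}. \<exists>!p. fst p > 0 \<and> snd p \<in> B \<and> k = fst p *\<^sub>R snd p"
    using assms(5) unfolding is_base_def by auto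
  have xS: "x \<notin> span S"
  proof
    assume "x \<in> span S"
    then obtain l' where l': "l' > 0" "\<forall>l\<in>{0..l'}. x + l *\<^sub>R x \<in> B"
      using x unfolding icr_def S_def by blast
    have yB: "x + l' *\<^sub>R x \<in> B" using l' by auto
    define k where "k = x + l' *\<^sub>R x"
    have k2: "k = (1 + l') *\<^sub>R x" unfolding k_def by (simp add: algebra_simps)
    have "k \<in> K - {0}" using yB base(1,2) unfolding k_def by auto
    then have "\<exists>!p. fst p > 0 \<and> snd p \<in> B \<and> k = fst p *\<^sub>R snd p" using base(3) by blast
    moreover have "fst (1::real, k) > 0 \<and> snd (1::real, k) \<in> B \<and> k = fst (1::real,k) *\<^sub>R snd (1::real, k)"
      using yB k_def by simp
    moreover have "fst (1 + l', x) > 0 \<and> snd (1 + l', x) \<in> B \<and> k = fst (1 + l', x) *\<^sub>R snd (1+l', x)"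
      using xB k2 l'(1) by simp
    ultimately have "(1::real, k) = (1 + l', x)" by blast
    then show False using l'(1) by simp
  qed
  obtain C where C: "C \<subseteq> S" "independent C" "S \<subseteq> span C"
    using maximal_independent_subset by blast
  have "x \<notin> span C" using xS span_mono[OF C(1)] by blast
  then have ind: "independent (insert x C)" using C(2) by (rule independent_insertI)
  from linear_independent_extend[OF ind, of "\<lambda>y. if y = x then (1::real) else 0"]
  obtain g :: "'a \<Rightarrow> real" where g: "linear g" "\<forall>y\<in>insert x C. g y = (if y = x then 1 else 0)"
    by blast
  have gC: "\<forall>y\<in>C. g y = 0"
  proof
    fix y assume "y \<in> C"
    then have "y \<in> span C" by (rule span_base)
    then have "y \<noteq> x" using \<open>x \<notin> span C\<close> by auto
    then show "g y = 0" using g(2) \<open>y \<in> C\<close> by simp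
  qed
  have g0: "\<forall>y\<in>span C. g y = 0"
    using linear_eq_0_on_span[OF g(1)] gC by blast
  have "\<forall>b\<in>B. g b = 1"
  proof
    fix b assume "b \<in> B"
    then have "b - x \<in> S" using xB unfolding S_def by auto
    then have "g (b - x) = 0" using g0 C(3) by (meson subsetD)
    moreover have "g (b - x) = g b - g x" using g(1) by (rule linear_diff)
    moreover have "g x = 1" using g(2) by simp
    ultimately show "g b = 1" by simp
  qed
  then have "\<exists>e>0. \<forall>b\<in>B. e \<le> g b" by (intro exI[of _ "1::real"]) simp
  then have "g \<in> Kss B" using g(1) unfolding Kss_def by blast
  then show ?thesis by blast
qed

end
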